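(* Let $r\in\{1,\dots,p\}$, $l\in\{1,\dots,r\}$, $L=\{1,\dots,l\}$, and let $1\le t_1<\dots<t_l\le r$ be integers; set $t_{l+1}:=r+1$ and $P=\{t_\iota:\iota\in L\}$. Let $\delta_{t_\iota}\in\mathbb{R}$ ($\iota\in L$) satisfy $\delta_{t_\iota}\ge h_{t_{\iota+1}}-h_{t_\iota}$ for all $\iota\in L$ and $\sum_{\iota\in L}\delta_{t_\iota}\le h_{r+1}$. Let $v\in\{1,\dots,p-r+l\}$, $V=\{1,\dots,v\}$, and let $r+1\le q_1<\dots<q_v\le m$ be integers, $Q=\{q_\iota:\iota\in V\}$. For $j\in M$ let $a_j=|\{\iota\in L:t_\iota<j\}|$ and $F_j=\sum_{i=1}^j\pi_i$, and let $A_j\subseteq V$ be arbitrary. Suppose $(\phi_{q_1},\dots,\phi_{q_v})\in\mathbb{R}^v_+$ is such that for every $j\in M$ there exists $\beta_j\ge0$ with $$\max\Big\{\tfrac{\phi_{q_\iota}}{m\pi_{q_\iota}}:\iota\in A_j,\ q_\iota>j\Big\}\le\beta_j\le\min\Big\{\tfrac{\phi_{q_\iota}}{m\pi_{q_\iota}}:\iota\in V\setminus A_j,\ q_\iota>j\Big\}$$ (with $\max\emptyset=-\infty$, $\min\emptyset=+\infty$) and $$\beta_j\Big(F_j-\pi_j-\varepsilon+\sum_{\iota\in V,\ q_\iota>j}\pi_{q_\iota}-\sum_{\iota\in A_j,\ q_\iota>j}\pi_{q_\iota}\Big)\ \ge\ \frac1m\Big(h_{t_{a_j+1}}-h_j-\sum_{\iota\in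 L,\ t_\iota<j}\delta_{t_\iota}-\mathbb{I}(j\in Q)\,\phi_j-\sum_{\iota\in A_j,\ q_\iota>j}\phi_{q_\iota}\Big),$$ where $\mathbb{I}(j\in Q)=1$ if $j\in Q$ and $0$ otherwise, and for $j\in Q$, $\phi_j$ denotes $\phi_{q_\iota}$ with $q_\iota=j$. Then the inequality $$z+\sum_{\iota=1}^l\big(h_{t_\iota}-h_{t_{\iota+1}}+\delta_{t_\iota}\big)x_{t_\iota}+\sum_{\iota=1}^v\phi_{q_\iota}(1-x_{q_\iota})\ \ge\ h_{t_1}$$ is valid for $\operatorname{proj}_{(z,\mathbf{x})}\operatorname{conv}(\mathcal{S}_c)$, and hence valid for $\operatorname{conv}(\mathcal{F}_c)$.
   Context: Let $m\ge2$, $M=\{1,\dots,m\}$, $\varepsilon\in[0,1)$, $\boldsymbol{\pi}\in\mathbb{R}^m$ with $\pi_i>0$, $\pi_i\le\varepsilon$ for all $i$ and $\sum_i\pi_i=1$, and $h_1\ge h_2\ge\dots\ge h_m\ge0$. Let $p=\max\{k:\sum_{i=1}^k\pi_i\le\varepsilon\}$ (so $1\le p\le m-1$). The mixing set with a knapsack constraint is $\mathcal{F}_c=\{(z,\mathbf{x})\in\mathbb{R}_+\times\{0,1\}^m : x_i=0\Rightarrow z\ge h_i\ \forall i\in M,\ \boldsymbol{\pi}^\top\mathbf{x}\le\varepsilon\}$. Let $\Xi_c=\{(z,\mathbf{x})\in\mathbb{R}_+\times\mathbb{R}^m_+ : \mathbf{x}\le\mathbf{1},\ \boldsymbol{\pi}^\top\mathbf{x}\le\varepsilon\}$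 and $\Delta_m=\{\mathbf{y}\in\mathbb{Z}^m_+:\mathbf{1}^\top\mathbf{y}\le1\}$. The bilinear set $\mathcal{S}_c$ is the set of $(z,\mathbf{x};\mathbf{y})\in\Xi_c\times\Delta_m$ satisfying: $(1-x_i)(1-\mathbf{1}^\top\mathbf{y})\ge0$ and $-(1-x_i)(1-\mathbf{1}^\top\mathbf{y})\ge0$ for all $i\in M$; $zy_i-h_iy_i\ge0$ for all $i\in M$; $-x_iy_i\ge0$ for all $i\in M$; $-(1-x_i)y_j\ge0$ for all $i,j\in M$ with $i<j$. *)

theory Defs
  imports "HOL-Analysis.Analysis" "HOL-Library.Function_Algebras"
begin

text \<open>Vectors of R^m are represented as functions nat => real, indexed by 1..m
  and zero outside {1..m}. To use the library notion of convex hull we make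
  nat => real (pointwise) a real vector space.\<close>

instantiation "fun" :: (type, real_vector) real_vector
begin
definition scaleR_fun :: "real \<Rightarrow> ('a \<Rightarrow> 'b) \<Rightarrow> 'a \<Rightarrow> 'b" where
  "scaleR_fun c f = (\<lambda>x. c *\<^sub>R f x)"
instance
  by standard (auto simp: scaleR_fun_def fun_eq_iff scaleR_add_right scaleR_add_left)
end

definition Fc :: "nat \<Rightarrow> real \<Rightarrow> (nat \<Rightarrow> real) \<Rightarrow> (nat \<Rightarrow> real)
                  \<Rightarrow> (real \<times> (nat \<Rightarrow> real)) set" where
  "Fc m \<epsilon> \<pi> h = {(z, x). z \<ge> 0
       \<and> (\<forall>i\<in>{1..m}. x i \<in> {0, 1})
       \<and> (\<forall>i. i \<notin> {1..m} \<longrightarrow> x i = 0)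
       \<and> (\<forall>i\<in>{1..m}. x i = 0 \<longrightarrow> z \<ge> h i)
       \<and> (\<Sum>i=1..m. \<pi> i * x i) \<le> \<epsilon>}"

definition Xic :: "nat \<Rightarrow> real \<Rightarrow> (nat \<Rightarrow> real) \<Rightarrow> (real \<times> (nat \<Rightarrow> real)) set" where
  "Xic m \<epsilon> \<pi> = {(z, x). z \<ge> 0
       \<and> (\<forall>i\<in>{1..m}. 0 \<le> x i \<and> x i \<le> 1)
       \<and> (\<forall>i. i \<notin> {1..m} \<longrightarrow> x i = 0)
       \<and> (\<Sum>i=1..m. \<pi> i * x i) \<le> \<epsilon>}"

definition Delta :: "nat \<Rightarrow> (nat \<Rightarrow> real) set" where
  "Delta m = {y. (\<forall>i\<in>{1..m}. y i \<in> \<int> \<and> y i \<ge> 0)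
       \<and> (\<forall>i. i \<notin> {1..m} \<longrightarrow> y i = 0)
       \<and> (\<Sum>i=1..m. y i) \<le> 1}"

definition Sc :: "nat \<Rightarrow> real \<Rightarrow> (nat \<Rightarrow> real) \<Rightarrow> (nat \<Rightarrow> real)
                  \<Rightarrow> (real \<times> (nat \<Rightarrow> real) \<times> (nat \<Rightarrow> real)) set" where
  "Sc m \<epsilon> \<pi> h = {(z, x, y). (z, x) \<in> Xic m \<epsilon> \<pi> \<and> y \<in> Delta m
       \<and> (\<forall>i\<in>{1..m}. (1 - x i) * (1 - (\<Sum>k=1..m. y k)) \<ge> 0)
       \<and> (\<forall>i\<in>{1..m}. - ((1 - x i) * (1 - (\<Sum>k=1..m. y k))) \<ge> 0)
       \<and> (\<forall>i\<in>{1..m}. z * y i - h i * y i \<ge> 0)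
       \<and> (\<forall>i\<in>{1..m}. - (x i * y i) \<ge> 0)
       \<and> (\<forall>i\<in>{1..m}. \<forall>j\<in>{1..m}. i < j \<longrightarrow> - ((1 - x i) * y j) \<ge> 0)}"

definition projConvSc :: "nat \<Rightarrow> real \<Rightarrow> (nat \<Rightarrow> real) \<Rightarrow> (nat \<Rightarrow> real)
                  \<Rightarrow> (real \<times> (nat \<Rightarrow> real)) set" where
  "projConvSc m \<epsilon> \<pi> h = (\<lambda>(z, x, y). (z, x)) ` (convex hull (Sc m \<epsilon> \<pi> h))"

end

theory Submission
  imports Defs
begin

definition G :: "(nat \<Rightarrow> real) \<Rightarrow> (nat \<Rightarrow> nat) \<Rightarrow> nat set \<Rightarrow> (nat \<Rightarrow> real) \<Rightarrow> (nat \<Rightarrow> nat) \<Rightarrow> nat set \<Rightarrow> real \<Rightarrow> (nat \<Rightarrow> real) \<Rightarrow> real" where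
  "G a t I b q J z x = z + (\<Sum>i\<in>I. a i * x (t i)) + (\<Sum>i\<in>J. b i * (1 - x (q i)))"

lemma G_affine:
  assumes "u + w = 1"
  shows "G a t I b q J (u * z1 + w * z2) (u *\<^sub>R x1 + w *\<^sub>R x2) = u * G a t I b q J z1 x1 + w * G a t I b q J z2 x2"
proof -
  have e: "(u *\<^sub>R x1 + w *\<^sub>R x2) k = u * x1 k + w * x2 k" for k
    by (simp add: scaleR_fun_def plus_fun_def)
  have s1: "(\<Sum>i\<in>I. a i * (u * x1 (t i) + w * x2 (t i))) = u * (\<Sum>i\<in>I. a i * x1 (t i)) + w * (\<Sum>i\<in>I. a i * x2 (t i))"
    by (simp add: sum_distrib_left sum.distrib algebra_simps)
  have s2: "(\<Sum>i\<in>J. b i * (1 - (u * x1 (q i) + w * x2 (q i)))) = u * (\<Sum>i\<in>J. b i * (1 - x1 (q i))) + w * (\<Sum>i\<in>J. b i * (1 - x2 (q i)))"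
  proof -
    have "\<And>i. b i * (1 - (u * x1 (q i) + w * x2 (q i))) = u * (b i * (1 - x1 (q i))) + w * (b i * (1 - x2 (q i)))"
      using assms by (simp add: algebra_simps) (metis add_diff_cancel_left' assms diff_add_cancel mult.commute distrib_left mult_1_right)
    then show ?thesis by (simp add: sum_distrib_left sum.distrib)
  qed
  show ?thesis unfolding G_def e s1 s2 by (simp add: algebra_simps)
qed

lemma G_convex2: "convex {w :: real \<times> (nat \<Rightarrow> real). c \<le> G a t I b q J (fst w) (snd w)}"
  unfolding convex_def
proof (intro ballI allI impI)
  fix p1 p2 :: "real \<times> (nat \<Rightarrow> real)" and u w :: real
  assume p: "p1 \<in> {w. c \<le> G a t I b q J (fst w) (snd w)}" "p2 \<in> {w. c \<le> G a t I b q J (fst w) (snd w)}"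
    and uw: "0 \<le> u" "0 \<le> w" "u + w = 1"
  have "c = u * c + w * c" using uw by (metis distrib_right mult_1_left)
  also have "\<dots> \<le> u * G a t I b q J (fst p1) (snd p1) + w * G a t I b q J (fst p2) (snd p2)"
    using p uw by (intro add_mono mult_left_mono) auto
  finally show "u *\<^sub>R p1 + w *\<^sub>R p2 \<in> {w. c \<le> G a t I b q J (fst w) (snd w)}"
    using G_affine[OF uw(3)] by simp
qed

lemma G_convex3: "convex {w :: real \<times> (nat \<Rightarrow> real) \<times> (nat \<Rightarrow> real). c \<le> G a t I b q J (fst w) (fst (snd w))}"
  unfolding convex_def
proof (intro ballI allI impI)
  fix p1 p2 :: "real \<times> (nat \<Rightarrow> real) \<times> (nat \<Rightarrow> real)" and u w :: real
  assume p: "p1 \<in> {w. c \<le> G a t I b q J (fst w) (fst (snd w))}" "p2 \<in> {w. c \<le> G a t I b q J (fst w) (fst (snd w))}"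
    and uw: "0 \<le> u" "0 \<le> w" "u + w = 1"
  have "c = u * c + w * c" using uw by (metis distrib_right mult_1_left)
  also have "\<dots> \<le> u * G a t I b q J (fst p1) (fst (snd p1)) + w * G a t I b q J (fst p2) (fst (snd p2))"
    using p uw by (intro add_mono mult_left_mono) auto
  finally show "u *\<^sub>R p1 + w *\<^sub>R p2 \<in> {w. c \<le> G a t I b q J (fst w) (fst (snd w))}"
    using G_affine[OF uw(3)] by simp
qed

lemma downclosed:
  assumes t_mono: "\<forall>i\<in>{1..l}. \<forall>j\<in>{1..l}. i < j \<longrightarrow> t i < t j"
  shows "{i\<in>{1..l}. t i < (j::nat)} = {1..card {i\<in>{1..l}. t i < j}}"
proof (cases "{i\<in>{1..l}. t i < j} = {}")
  case True then show ?thesis by simp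
next
  case False
  define D where "D = {i\<in>{1..l}. t i < j}"
  have fD: "finite D" unfolding D_def by simp
  define k where "k = Max D"
  have kD: "k \<in> D" using False fD Max_in D_def k_def by blast
  have kl: "k \<le> l" "t k < j" using kD D_def by auto
  have "D = {1..k}"
  proof
    show "D \<subseteq> {1..k}"
    proof
      fix i assume "i \<in> D"
      then show "i \<in> {1..k}" using fD k_def D_def Max_ge by fastforce
    qed
    show "{1..k} \<subseteq> D"
    proof
      fix i assume i: "i \<in> {1..k}"
      have "t i \<le> t k"
      proof (cases "i = k")
        case False
        then have "i < k" using i by simp
        then show ?thesis using t_mono i kl by (meson atLeastAtMost_iff le_trans less_imp_le_nat)
      qed simp
      then show "i \<in> D" using kl i D_def by simp
    qed
  qed
  then show ?thesis unfolding D_def[symmetric] by simp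
qed

lemma telesc: "(\<Sum>i=1..(a::nat). (f i - f (i+1)) :: real) = f 1 - f (a+1)"
  by (induction a) auto


lemma core:
  fixes m l v j :: nat and \<epsilon> z :: real and \<pi> h \<delta> \<phi> x :: "nat \<Rightarrow> real"
    and t q :: "nat \<Rightarrow> nat" and Aj :: "nat set"
  assumes j: "j \<in> {1..m}"
    and x01: "\<forall>i\<in>{1..m}. 0 \<le> x i \<and> x i \<le> 1"
    and xlow: "\<forall>i\<in>{1..m}. i < j \<longrightarrow> x i = 1"
    and xj: "x j = 0"
    and zj: "h j \<le> z"
    and knap: "(\<Sum>i=1..m. \<pi> i * x i) \<le> \<epsilon>"
    and pi_pos: "\<forall>i\<in>{1..m}. \<pi> i > 0"
    and t_mono: "\<forall>i\<in>{1..l}. \<forall>j\<in>{1..l}. i < j \<longrightarrow> t i < t j"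
    and t_range: "\<forall>i\<in>{1..l}. t i \<in> {1..m}"
    and delta_lb: "\<forall>i\<in>{1..l}. \<delta> (t i) \<ge> h (t (i + 1)) - h (t i)"
    and q_mono: "\<forall>i\<in>{1..v}. \<forall>j\<in>{1..v}. i < j \<longrightarrow> q i < q j"
    and q_range: "\<forall>i\<in>{1..v}. q i \<in> {1..m}"
    and A_sub: "Aj \<subseteq> {1..v}"
    and phi_nonneg: "\<forall>i\<in>{1..v}. \<phi> (q i) \<ge> 0"
    and beta: "\<exists>\<beta>::real. \<beta> \<ge> 0
        \<and> (\<forall>i\<in>Aj. q i > j \<longrightarrow> \<phi> (q i) / (real m * \<pi> (q i)) \<le> \<beta>)
        \<and> (\<forall>i\<in>{1..v} - Aj. q i > j \<longrightarrow> \<beta> \<le> \<phi> (q i) / (real m * \<pi> (q i)))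
        \<and> \<beta> * ((\<Sum>i=1..j. \<pi> i) - \<pi> j - \<epsilon>
                + (\<Sum>i\<in>{i\<in>{1..v}. q i > j}. \<pi> (q i))
                - (\<Sum>i\<in>{i\<in>Aj. q i > j}. \<pi> (q i)))
          \<ge> (1 / real m) * (h (t (card {i\<in>{1..l}. t i < j} + 1)) - h j
                - (\<Sum>i\<in>{i\<in>{1..l}. t i < j}. \<delta> (t i))
                - (if j \<in> q ` {1..v} then \<phi> j else 0)
                - (\<Sum>i\<in>{i\<in>Aj. q i > j}. \<phi> (q i)))"
  shows "z + (\<Sum>i=1..l. (h (t i) - h (t (i + 1)) + \<delta> (t i)) * x (t i))
              + (\<Sum>i=1..v. \<phi> (q i) * (1 - x (q i))) \<ge> h (t 1)"
proof -
  obtain \<beta> :: real where b0: "\<beta> \<ge> 0"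
    and bA: "\<forall>i\<in>Aj. q i > j \<longrightarrow> \<phi> (q i) / (real m * \<pi> (q i)) \<le> \<beta>"
    and bN: "\<forall>i\<in>{1..v} - Aj. q i > j \<longrightarrow> \<beta> \<le> \<phi> (q i) / (real m * \<pi> (q i))"
    and bI: "\<beta> * ((\<Sum>i=1..j. \<pi> i) - \<pi> j - \<epsilon>
                + (\<Sum>i\<in>{i\<in>{1..v}. q i > j}. \<pi> (q i))
                - (\<Sum>i\<in>{i\<in>Aj. q i > j}. \<pi> (q i)))
          \<ge> (1 / real m) * (h (t (card {i\<in>{1..l}. t i < j} + 1)) - h j
                - (\<Sum>i\<in>{i\<in>{1..l}. t i < j}. \<delta> (t i))
                - (if j \<in> q ` {1..v} then \<phi> j else 0)
                - (\<Sum>i\<in>{i\<in>Aj. q i > j}. \<phi> (q i)))"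
    using beta by blast
  have mpos: "real m > 0" using j by auto
  define S where "S = {i\<in>{1..l}. t i < j}"
  define a where "a = card S"
  define G where "G = {i\<in>{1..v}. q i > j}"
  define GA where "GA = {i\<in>Aj. q i > j}"
  define I where "I = (if j \<in> q ` {1..v} then \<phi> j else 0)"
  define R where "R = h (t (a + 1)) - h j - (\<Sum>i\<in>S. \<delta> (t i))"
  define b where "b = real m * \<beta>"
  have b0': "b \<ge> 0" using b0 mpos b_def by simp
  have GA_sub: "GA \<subseteq> G" using A_sub unfolding GA_def G_def by auto
  have fG: "finite G" unfolding G_def by simp
  have Sa: "S = {1..a}" unfolding S_def a_def using downclosed[OF t_mono] by simp
  have cnn: "\<forall>i\<in>{1..l}. h (t i) - h (t (i + 1)) + \<delta> (t i) \<ge> 0"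
  proof
    fix i assume "i \<in> {1..l}"
    then have "h (t (i+1)) - h (t i) \<le> \<delta> (t i)" using delta_lb by blast
    then show "h (t i) - h (t (i + 1)) + \<delta> (t i) \<ge> 0" by linarith
  qed
  have T1: "(\<Sum>i=1..l. (h (t i) - h (t (i + 1)) + \<delta> (t i)) * x (t i))
      \<ge> (\<Sum>i\<in>S. (h (t i) - h (t (i + 1)) + \<delta> (t i)) * x (t i))"
    by (rule sum_mono2) (use cnn x01 t_range S_def in auto)
  have T2: "(\<Sum>i\<in>S. (h (t i) - h (t (i + 1)) + \<delta> (t i)) * x (t i))
      = (\<Sum>i\<in>S. (h (t i) - h (t (i + 1)))) + (\<Sum>i\<in>S. \<delta> (t i))"
    by (subst sum.distrib[symmetric], rule sum.cong) (use xlow t_range S_def in auto)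
  have T3: "(\<Sum>i\<in>S. (h (t i) - h (t (i + 1)))) = h (t 1) - h (t (a+1))"
    unfolding Sa using telesc[of "\<lambda>i. h (t i)" a] by simp
  have fnn: "\<forall>i\<in>{1..v}. \<phi> (q i) * (1 - x (q i)) \<ge> 0" using phi_nonneg x01 q_range by auto
  have P1: "(\<Sum>i=1..v. \<phi> (q i) * (1 - x (q i))) \<ge> I + (\<Sum>i\<in>G. \<phi> (q i) * (1 - x (q i)))"
  proof (cases "j \<in> q ` {1..v}")
    case True
    then obtain k where k: "k \<in> {1..v}" "q k = j" by auto
    have kG: "k \<notin> G" using k G_def by auto
    have "(\<Sum>i=1..v. \<phi> (q i) * (1 - x (q i))) \<ge> (\<Sum>i\<in>insert k G. \<phi> (q i) * (1 - x (q i)))"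
      by (rule sum_mono2) (use fnn k G_def in auto)
    also have "(\<Sum>i\<in>insert k G. \<phi> (q i) * (1 - x (q i))) = \<phi> j + (\<Sum>i\<in>G. \<phi> (q i) * (1 - x (q i)))"
      using kG fG k xj by simp
    finally show ?thesis using True I_def by simp
  next
    case False
    have "(\<Sum>i=1..v. \<phi> (q i) * (1 - x (q i))) \<ge> (\<Sum>i\<in>G. \<phi> (q i) * (1 - x (q i)))"
      by (rule sum_mono2) (use fnn G_def in auto)
    then show ?thesis using False I_def by simp
  qed
  have termw: "\<phi> (q i) * (1 - x (q i)) \<ge> (if i \<in> Aj then \<phi> (q i) else 0)
      + b * ((if i \<in> Aj then 0 else \<pi> (q i)) - \<pi> (q i) * x (q i))" if iG: "i \<in> G" for i
  proof -
    have qi: "q i \<in> {1..m}" "q i > j" "i \<in> {1..v}" using iG G_def q_range by auto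
    have pq: "\<pi> (q i) > 0" using qi pi_pos by auto
    have xq: "0 \<le> x (q i)" "x (q i) \<le> 1" using qi x01 by auto
    show ?thesis
    proof (cases "i \<in> Aj")
      case True
      have "\<phi> (q i) / (real m * \<pi> (q i)) \<le> \<beta>" using bA True qi by auto
      then have "\<phi> (q i) \<le> b * \<pi> (q i)" using pq mpos b_def
        by (simp add: divide_le_eq mult.commute mult.left_commute)
      then have "\<phi> (q i) * x (q i) \<le> b * \<pi> (q i) * x (q i)" using xq by (simp add: mult_right_mono)
      then show ?thesis using True by (simp add: algebra_simps)
    next
      case False
      have "\<beta> \<le> \<phi> (q i) / (real m * \<pi> (q i))" using bN False qi by auto
      then have "b * \<pi> (q i) \<le> \<phi> (q i)" using pq mpos b_def
        by (simp add: le_divide_eq mult.commute mult.left_commute)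
      then have "b * \<pi> (q i) * (1 - x (q i)) \<le> \<phi> (q i) * (1 - x (q i))" using xq by (simp add: mult_right_mono)
      then show ?thesis using False by (simp add: algebra_simps)
    qed
  qed
  have P2: "(\<Sum>i\<in>G. \<phi> (q i) * (1 - x (q i))) \<ge> (\<Sum>i\<in>G. (if i \<in> Aj then \<phi> (q i) else 0)
      + b * ((if i \<in> Aj then 0 else \<pi> (q i)) - \<pi> (q i) * x (q i)))"
    by (rule sum_mono) (use termw in auto)
  have GAeq: "GA = G \<inter> Aj" unfolding GA_def G_def using A_sub by auto
  have P3: "(\<Sum>i\<in>G. (if i \<in> Aj then \<phi> (q i) else 0)) = (\<Sum>i\<in>GA. \<phi> (q i))"
    unfolding GAeq using fG by (simp add: sum.inter_restrict)
  have P4: "(\<Sum>i\<in>G. (if i \<in> Aj then 0 else \<pi> (q i))) = (\<Sum>i\<in>G. \<pi> (q i)) - (\<Sum>i\<in>GA. \<pi> (q i))"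
  proof -
    have "(\<Sum>i\<in>G. \<pi> (q i)) = (\<Sum>i\<in>G. (if i \<in> Aj then \<pi> (q i) else 0)) + (\<Sum>i\<in>G. (if i \<in> Aj then 0 else \<pi> (q i)))"
      by (subst sum.distrib[symmetric]) (rule sum.cong, auto)
    moreover have "(\<Sum>i\<in>G. (if i \<in> Aj then \<pi> (q i) else 0)) = (\<Sum>i\<in>GA. \<pi> (q i))"
      unfolding GAeq using fG by (simp add: sum.inter_restrict)
    ultimately show ?thesis by simp
  qed
  have P5: "(\<Sum>i\<in>G. (if i \<in> Aj then \<phi> (q i) else 0)
      + b * ((if i \<in> Aj then 0 else \<pi> (q i)) - \<pi> (q i) * x (q i)))
     = (\<Sum>i\<in>GA. \<phi> (q i)) + b * ((\<Sum>i\<in>G. \<pi> (q i)) - (\<Sum>i\<in>GA. \<pi> (q i)) - (\<Sum>i\<in>G. \<pi> (q i) * x (q i)))"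
  proof -
    have e1: "(\<Sum>i\<in>G. (if i \<in> Aj then \<phi> (q i) else 0)
      + b * ((if i \<in> Aj then 0 else \<pi> (q i)) - \<pi> (q i) * x (q i)))
      = (\<Sum>i\<in>G. (if i \<in> Aj then \<phi> (q i) else 0))
        + b * ((\<Sum>i\<in>G. (if i \<in> Aj then 0 else \<pi> (q i))) - (\<Sum>i\<in>G. \<pi> (q i) * x (q i)))"
      by (simp add: sum.distrib sum_distrib_left sum_subtractf right_diff_distrib)
    show ?thesis unfolding e1 P3 P4 by simp
  qed
  have injq: "inj_on q G"
  proof (rule inj_onI)
    fix i k assume "i \<in> G" "k \<in> G" "q i = q k"
    then have ik: "i \<in> {1..v}" "k \<in> {1..v}" "q i = q k" using G_def by auto
    show "i = k"
    proof (cases i k rule: linorder_cases)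
      case less
      then have "q i < q k" using q_mono ik by blast
      then show ?thesis using ik by simp
    next
      case greater
      then have "q k < q i" using q_mono ik by blast
      then show ?thesis using ik by simp
    qed
  qed
  have K1: "(\<Sum>i\<in>G. \<pi> (q i) * x (q i)) = (\<Sum>k\<in>q ` G. \<pi> k * x k)"
    using sum.reindex[OF injq, of "\<lambda>k. \<pi> k * x k"] by simp
  have K2: "(\<Sum>k\<in>q ` G. \<pi> k * x k) \<le> (\<Sum>k\<in>{j+1..m}. \<pi> k * x k)"
  proof (rule sum_mono2)
    show "q ` G \<subseteq> {j+1..m}" using G_def q_range by auto
  next
    fix k assume "k \<in> {j+1..m} - q ` G"
    then have "k \<in> {1..m}" by auto
    then show "0 \<le> \<pi> k * x k" using pi_pos x01 by (simp add: less_imp_le)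
  qed simp
  have split: "{1..m} = {1..j} \<union> {j+1..m}" using j by auto
  have K3: "(\<Sum>i=1..m. \<pi> i * x i) = (\<Sum>i=1..j. \<pi> i * x i) + (\<Sum>k\<in>{j+1..m}. \<pi> k * x k)"
    unfolding split by (rule sum.union_disjoint) auto
  have K4: "(\<Sum>i=1..j. \<pi> i * x i) = (\<Sum>i=1..j. \<pi> i) - \<pi> j"
  proof -
    have "(\<Sum>i=1..j. \<pi> i * x i) = (\<Sum>i=1..j. \<pi> i - (if i = j then \<pi> i else 0))"
      by (rule sum.cong) (use xlow xj j in auto)
    also have "\<dots> = (\<Sum>i=1..j. \<pi> i) - \<pi> j" using j by (simp add: sum_subtractf)
    finally show ?thesis .
  qed
  have K: "(\<Sum>i\<in>G. \<pi> (q i) * x (q i)) \<le> \<epsilon> - ((\<Sum>i=1..j. \<pi> i) - \<pi> j)"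
    using K1 K2 K3 K4 knap by linarith
  have bI': "b * ((\<Sum>i=1..j. \<pi> i) - \<pi> j - \<epsilon> + (\<Sum>i\<in>G. \<pi> (q i)) - (\<Sum>i\<in>GA. \<pi> (q i)))
      \<ge> R - I - (\<Sum>i\<in>GA. \<phi> (q i))"
  proof -
    have "real m * (\<beta> * ((\<Sum>i=1..j. \<pi> i) - \<pi> j - \<epsilon> + (\<Sum>i\<in>G. \<pi> (q i)) - (\<Sum>i\<in>GA. \<pi> (q i))))
      \<ge> real m * ((1 / real m) * (R - I - (\<Sum>i\<in>GA. \<phi> (q i))))"
      using bI mpos unfolding R_def I_def G_def GA_def a_def S_def by (intro mult_left_mono) auto
    then show ?thesis using mpos b_def by (simp add: mult.assoc)
  qed
  have Kb: "b * ((\<Sum>i\<in>G. \<pi> (q i)) - (\<Sum>i\<in>GA. \<pi> (q i)) - (\<Sum>i\<in>G. \<pi> (q i) * x (q i)))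
     \<ge> b * ((\<Sum>i=1..j. \<pi> i) - \<pi> j - \<epsilon> + (\<Sum>i\<in>G. \<pi> (q i)) - (\<Sum>i\<in>GA. \<pi> (q i)))"
    using K b0' by (intro mult_left_mono) auto
  show ?thesis
    using T1 T2 T3 P1 P2 P5 bI' Kb zj unfolding R_def by linarith
qed

theorem mainTheorem8:
  fixes m p r l v :: nat and \<epsilon> :: real and \<pi> h \<delta> \<phi> :: "nat \<Rightarrow> real"
    and t q :: "nat \<Rightarrow> nat" and A :: "nat \<Rightarrow> nat set"
  assumes m2: "m \<ge> 2"
    and eps: "0 \<le> \<epsilon>" "\<epsilon> < 1"
    and pi_pos: "\<forall>i\<in>{1..m}. \<pi> i > 0"
    and pi_le: "\<forall>i\<in>{1..m}. \<pi> i \<le> \<epsilon>"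
    and pi_sum: "(\<Sum>i=1..m. \<pi> i) = 1"
    and h_mono: "\<forall>i\<in>{1..m}. \<forall>j\<in>{1..m}. i \<le> j \<longrightarrow> h j \<le> h i"
    and h_nonneg: "h m \<ge> 0"
    and p_def: "p = Max {k\<in>{0..m}. (\<Sum>i=1..k. \<pi> i) \<le> \<epsilon>}"
    and r: "1 \<le> r" "r \<le> p"
    and l: "1 \<le> l" "l \<le> r"
    and t_mono: "\<forall>i\<in>{1..l}. \<forall>j\<in>{1..l}. i < j \<longrightarrow> t i < t j"
    and t_bounds: "1 \<le> t 1" "t l \<le> r"
    and t_last: "t (l + 1) = r + 1"
    and delta_lb: "\<forall>i\<in>{1..l}. \<delta> (t i) \<ge> h (t (i + 1)) - h (t i)"
    and delta_sum: "(\<Sum>i=1..l. \<delta> (t i)) \<le> h (r + 1)"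
    and v: "1 \<le> v" "v \<le> p - r + l"
    and q_mono: "\<forall>i\<in>{1..v}. \<forall>j\<in>{1..v}. i < j \<longrightarrow> q i < q j"
    and q_bounds: "r + 1 \<le> q 1" "q v \<le> m"
    and A_sub: "\<forall>j\<in>{1..m}. A j \<subseteq> {1..v}"
    and phi_nonneg: "\<forall>i\<in>{1..v}. \<phi> (q i) \<ge> 0"
    and beta: "\<forall>j\<in>{1..m}. \<exists>\<beta>::real. \<beta> \<ge> 0
        \<and> (\<forall>i\<in>A j. q i > j \<longrightarrow> \<phi> (q i) / (real m * \<pi> (q i)) \<le> \<beta>)
        \<and> (\<forall>i\<in>{1..v} - A j. q i > j \<longrightarrow> \<beta> \<le> \<phi> (q i) / (real m * \<pi> (q i)))
        \<and> \<beta> * ((\<Sum>i=1..j. \<pi> i) - \<pi> j - \<epsilon>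
                + (\<Sum>i\<in>{i\<in>{1..v}. q i > j}. \<pi> (q i))
                - (\<Sum>i\<in>{i\<in>A j. q i > j}. \<pi> (q i)))
          \<ge> (1 / real m) * (h (t (card {i\<in>{1..l}. t i < j} + 1)) - h j
                - (\<Sum>i\<in>{i\<in>{1..l}. t i < j}. \<delta> (t i))
                - (if j \<in> q ` {1..v} then \<phi> j else 0)
                - (\<Sum>i\<in>{i\<in>A j. q i > j}. \<phi> (q i)))"
  shows "(\<forall>(z, x) \<in> projConvSc m \<epsilon> \<pi> h.
            z + (\<Sum>i=1..l. (h (t i) - h (t (i + 1)) + \<delta> (t i)) * x (t i))
              + (\<Sum>i=1..v. \<phi> (q i) * (1 - x (q i))) \<ge> h (t 1))
       \<and> (\<forall>(z, x) \<in> convex hull (Fc m \<epsilon> \<pi> h).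
            z + (\<Sum>i=1..l. (h (t i) - h (t (i + 1)) + \<delta> (t i)) * x (t i))
              + (\<Sum>i=1..v. \<phi> (q i) * (1 - x (q i))) \<ge> h (t 1))"
  proof -
  define K where "K = {k\<in>{0..m}. (\<Sum>i=1..k. \<pi> i) \<le> \<epsilon>}"
  have fK: "finite K" unfolding K_def by simp
  have K0: "0 \<in> K" unfolding K_def using eps by simp
  have pK: "p \<in> K" using p_def K_def fK K0 Max_in by blast
  have pm: "p \<le> m" "(\<Sum>i=1..p. \<pi> i) \<le> \<epsilon>" using pK K_def by auto
  have pnm: "p \<noteq> m" using pm pi_sum eps by auto
  have rm: "r + 1 \<le> m" using pm pnm r by simp
  have t_range: "\<forall>i\<in>{1..l}. t i \<in> {1..m}"
  proof
    fix i assume i: "i \<in> {1..l}"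
    have "t 1 \<le> t i" using t_mono i l by (cases "i = 1") (auto intro: less_imp_le)
    moreover have "t i \<le> t l" using t_mono i l by (cases "i = l") (auto intro: less_imp_le)
    ultimately show "t i \<in> {1..m}" using t_bounds rm by simp
  qed
  have q_range: "\<forall>i\<in>{1..v}. q i \<in> {1..m}"
  proof
    fix i assume i: "i \<in> {1..v}"
    have "q 1 \<le> q i" using q_mono i v by (cases "i = 1") (auto intro: less_imp_le)
    moreover have "q i \<le> q v" using q_mono i v by (cases "i = v") (auto intro: less_imp_le)
    ultimately show "q i \<in> {1..m}" using q_bounds rm by simp
  qed
  define a where "a = (\<lambda>i. h (t i) - h (t (i + 1)) + \<delta> (t i))"
  define b where "b = (\<lambda>i. \<phi> (q i))"
  have CORE: "h (t 1) \<le> G a t {1..l} b q {1..v} z x"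
    if j: "j \<in> {1..m}"
    and x01: "\<forall>i\<in>{1..m}. 0 \<le> x i \<and> x i \<le> 1"
    and xlow: "\<forall>i\<in>{1..m}. i < j \<longrightarrow> x i = 1"
    and xj: "x j = 0"
    and zj: "h j \<le> z"
    and knap: "(\<Sum>i=1..m. \<pi> i * x i) \<le> \<epsilon>" for j z x
  proof -
    have "z + (\<Sum>i=1..l. (h (t i) - h (t (i + 1)) + \<delta> (t i)) * x (t i))
              + (\<Sum>i=1..v. \<phi> (q i) * (1 - x (q i))) \<ge> h (t 1)"
      by (rule core[OF j x01 xlow xj zj knap pi_pos t_mono t_range delta_lb q_mono q_range
          bspec[OF A_sub j] phi_nonneg bspec[OF beta j]])
    then show ?thesis unfolding G_def a_def b_def by simp
  qed
  have int01: "u = 0" if uu: "u \<in> \<int>" "0 \<le> u" "u \<le> 1" "u \<noteq> 1" for u :: real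
  proof -
    obtain k where k: "u = of_int k" using uu(1) Ints_cases by blast
    have "0 \<le> k" using uu(2) k by simp
    moreover have "k \<le> 1" using uu(3) k by simp
    moreover have "k \<noteq> 1" using uu(4) k by simp
    ultimately have "k = 0" by linarith
    then show ?thesis using k by simp
  qed
  have ScT: "Sc m \<epsilon> \<pi> h \<subseteq> {w. h (t 1) \<le> G a t {1..l} b q {1..v} (fst w) (fst (snd w))}"
  proof
    fix w assume w: "w \<in> Sc m \<epsilon> \<pi> h"
    obtain z x y where wz: "w = (z, x, y)" by (cases w) auto
    have X: "(z, x) \<in> Xic m \<epsilon> \<pi>" and Y: "y \<in> Delta m"
      and c1: "\<forall>i\<in>{1..m}. (1 - x i) * (1 - (\<Sum>k=1..m. y k)) \<ge> 0"
      and c2: "\<forall>i\<in>{1..m}. - ((1 - x i) * (1 - (\<Sum>k=1..m. y k))) \<ge> 0"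
      and c3: "\<forall>i\<in>{1..m}. z * y i - h i * y i \<ge> 0"
      and c4: "\<forall>i\<in>{1..m}. - (x i * y i) \<ge> 0"
      and c5: "\<forall>i\<in>{1..m}. \<forall>j\<in>{1..m}. i < j \<longrightarrow> - ((1 - x i) * y j) \<ge> 0"
      using w wz unfolding Sc_def by auto
    have x01: "\<forall>i\<in>{1..m}. 0 \<le> x i \<and> x i \<le> 1" and knap: "(\<Sum>i=1..m. \<pi> i * x i) \<le> \<epsilon>"
      using X unfolding Xic_def by auto
    have yI: "\<forall>i\<in>{1..m}. y i \<in> \<int> \<and> y i \<ge> 0" and ys: "(\<Sum>i=1..m. y i) \<le> 1"
      using Y unfolding Delta_def by auto
    have sy: "(\<Sum>k=1..m. y k) = 1"
    proof (rule ccontr)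
      assume ne: "(\<Sum>k=1..m. y k) \<noteq> 1"
      have "\<forall>i\<in>{1..m}. x i = 1"
      proof
        fix i assume i: "i \<in> {1..m}"
        have "0 \<le> (1 - x i) * (1 - (\<Sum>k=1..m. y k))" using bspec[OF c1 i] .
        moreover have "0 \<le> - ((1 - x i) * (1 - (\<Sum>k=1..m. y k)))" using bspec[OF c2 i] .
        ultimately have "(1 - x i) * (1 - (\<Sum>k=1..m. y k)) = 0" by linarith
        then show "x i = 1" using ne by simp
      qed
      then have "(\<Sum>i=1..m. \<pi> i * x i) = 1" using pi_sum by simp
      then show False using knap eps by simp
    qed
    obtain j where j: "j \<in> {1..m}" "y j = 1"
    proof (rule ccontr)
      assume "\<not> thesis"
      then have "\<forall>i\<in>{1..m}. y i \<noteq> 1" using that by blast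
      then have "\<forall>i\<in>{1..m}. y i = 0"
      proof (intro ballI)
        fix i assume i: "i \<in> {1..m}" and n1: "\<forall>i\<in>{1..m}. y i \<noteq> 1"
        have "y i \<le> (\<Sum>k=1..m. y k)"
          by (rule member_le_sum) (use yI i in auto)
        then show "y i = 0" using int01[of "y i"] yI i n1 sy by auto
      qed
      then have "(\<Sum>k=1..m. y k) = 0" by simp
      then show False using sy by simp
    qed
    have "z * y j - h j * y j \<ge> 0" using bspec[OF c3 j(1)] .
    then have zj: "h j \<le> z" using j by simp
    have "- (x j * y j) \<ge> 0" "0 \<le> x j" using bspec[OF c4 j(1)] bspec[OF x01 j(1)] by simp_all
    then have xj: "x j = 0" using j by simp
    have xlow: "\<forall>i\<in>{1..m}. i < j \<longrightarrow> x i = 1"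
    proof (intro ballI impI)
      fix i assume i: "i \<in> {1..m}" "i < j"
      have "- ((1 - x i) * y j) \<ge> 0" using bspec[OF bspec[OF c5 i(1)] j(1)] i(2) by simp
      moreover have "x i \<le> 1" using bspec[OF x01 i(1)] by simp
      ultimately show "x i = 1" using j by simp
    qed
    show "w \<in> {w. h (t 1) \<le> G a t {1..l} b q {1..v} (fst w) (fst (snd w))}"
      using CORE[OF j(1) x01 xlow xj zj knap] wz by simp
  qed
  have hullS: "convex hull (Sc m \<epsilon> \<pi> h) \<subseteq> {w. h (t 1) \<le> G a t {1..l} b q {1..v} (fst w) (fst (snd w))}"
    using hull_minimal[OF ScT, of convex] G_convex3 by blast
  have FcT: "Fc m \<epsilon> \<pi> h \<subseteq> {w. h (t 1) \<le> G a t {1..l} b q {1..v} (fst w) (snd w)}"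
  proof
    fix w assume w: "w \<in> Fc m \<epsilon> \<pi> h"
    obtain z x where wz: "w = (z, x)" by (cases w) auto
    have x01': "\<forall>i\<in>{1..m}. x i \<in> {0, 1}" and zh: "\<forall>i\<in>{1..m}. x i = 0 \<longrightarrow> z \<ge> h i"
      and knap: "(\<Sum>i=1..m. \<pi> i * x i) \<le> \<epsilon>"
      using w wz unfolding Fc_def by auto
    have x01: "\<forall>i\<in>{1..m}. 0 \<le> x i \<and> x i \<le> 1" using x01' by auto
    have ex: "\<exists>i. i \<in> {1..m} \<and> x i = 0"
    proof (rule ccontr)
      assume "\<not> ?thesis"
      then have "\<forall>i\<in>{1..m}. x i = 1" using x01' by auto
      then have "(\<Sum>i=1..m. \<pi> i * x i) = 1" using pi_sum by simp
      then show False using knap eps by simp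
    qed
    define j where "j = (LEAST i. i \<in> {1..m} \<and> x i = 0)"
    have j: "j \<in> {1..m}" "x j = 0" using LeastI_ex[OF ex] j_def by auto
    have xlow: "\<forall>i\<in>{1..m}. i < j \<longrightarrow> x i = 1"
    proof (intro ballI impI)
      fix i assume i: "i \<in> {1..m}" "i < j"
      then have "x i \<noteq> 0" using not_less_Least j_def by blast
      then show "x i = 1" using x01' i by auto
    qed
    have zj: "h j \<le> z" using zh j by auto
    show "w \<in> {w. h (t 1) \<le> G a t {1..l} b q {1..v} (fst w) (snd w)}"
      using CORE[OF j(1) x01 xlow j(2) zj knap] wz by simp
  qed
  have hullF: "convex hull (Fc m \<epsilon> \<pi> h) \<subseteq> {w. h (t 1) \<le> G a t {1..l} b q {1..v} (fst w) (snd w)}"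
    using hull_minimal[OF FcT, of convex] G_convex2 by blast
  show ?thesis
  proof (intro conjI)
    show "\<forall>(z, x) \<in> projConvSc m \<epsilon> \<pi> h.
            z + (\<Sum>i=1..l. (h (t i) - h (t (i + 1)) + \<delta> (t i)) * x (t i))
              + (\<Sum>i=1..v. \<phi> (q i) * (1 - x (q i))) \<ge> h (t 1)"
    proof (clarify)
      fix z x assume "(z, x) \<in> projConvSc m \<epsilon> \<pi> h"
      then obtain y where "(z, x, y) \<in> convex hull (Sc m \<epsilon> \<pi> h)"
        unfolding projConvSc_def by auto
      then have "h (t 1) \<le> G a t {1..l} b q {1..v} z x" using hullS by auto
      then show "z + (\<Sum>i=1..l. (h (t i) - h (t (i + 1)) + \<delta> (t i)) * x (t i))
              + (\<Sum>i=1..v. \<phi> (q i) * (1 - x (q i))) \<ge> h (t 1)"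
        unfolding G_def a_def b_def by simp
    qed
    show "\<forall>(z, x) \<in> convex hull (Fc m \<epsilon> \<pi> h).
            z + (\<Sum>i=1..l. (h (t i) - h (t (i + 1)) + \<delta> (t i)) * x (t i))
              + (\<Sum>i=1..v. \<phi> (q i) * (1 - x (q i))) \<ge> h (t 1)"
    proof (clarify)
      fix z x assume "(z, x) \<in> convex hull (Fc m \<epsilon> \<pi> h)"
      then have "h (t 1) \<le> G a t {1..l} b q {1..v} z x" using hullF by auto
      then show "z + (\<Sum>i=1..l. (h (t i) - h (t (i + 1)) + \<delta> (t i)) * x (t i))
              + (\<Sum>i=1..v. \<phi> (q i) * (1 - x (q i))) \<ge> h (t 1)"
        unfolding G_def a_def b_def by simp
    qed
  qed
qed

end
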